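(* Let $\Gamma$ be an oriented Jordan smooth curve and $\alpha:\Gamma\to\Gamma$ a homeomorphism with nonempty set $\Lambda$ of periodic points. Then the set $Y\setminus Y'$ of isolated points of $Y$ is contained in the set of endpoints of the connected components of $\Phi\setminus\Lambda\,(=\Gamma\setminus\Lambda)$.
   Context: $\alpha_n$ denote iterates of $\alpha$. If $\alpha$ preserves the orientation, all periodic points have a common multiplicity $m$ (period); if $\alpha$ changes the orientation, set $m=2$; $\Lambda$ is the set of fixed points of $\alpha_m$. $\Phi=\overline{\{t:\alpha_m(t)\ne t\}}$, $Y=\Lambda\cap\Phi$, $Y'$ the set of limit points of $Y$. *)

theory Defs
  imports "HOL-Analysis.Analysis"
begin

definition smooth_jordan_curve :: "complex set \<Rightarrow> bool" where
  "smooth_jordan_curve \<Gamma> \<longleftrightarrow>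
     (\<exists>\<gamma>. simple_path \<gamma> \<and> path_image \<gamma> = \<Gamma> \<and>
          \<gamma> C1_differentiable_on {0..1} \<and>
          (\<forall>t\<in>{0..1}. vector_derivative \<gamma> (at t within {0..1}) \<noteq> 0) \<and>
          (pathstart \<gamma> = pathfinish \<gamma> \<longrightarrow>
             vector_derivative \<gamma> (at 0 within {0..1}) = vector_derivative \<gamma> (at 1 within {0..1})))"

definition periodic_points :: "complex set \<Rightarrow> (complex \<Rightarrow> complex) \<Rightarrow> complex set" where
  "periodic_points \<Gamma> \<alpha> = {t \<in> \<Gamma>. \<exists>n>0. (\<alpha> ^^ n) t = t}"

definition mult_m :: "complex set \<Rightarrow> (complex \<Rightarrow> complex) \<Rightarrow> nat" where
  "mult_m \<Gamma> \<alpha> = (LEAST m. m > 0 \<and> (\<forall>t \<in> periodic_points \<Gamma> \<alpha>. (\<alpha> ^^ m) t = t))"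

definition Lambda_set :: "complex set \<Rightarrow> (complex \<Rightarrow> complex) \<Rightarrow> complex set" where
  "Lambda_set \<Gamma> \<alpha> = {t \<in> \<Gamma>. (\<alpha> ^^ mult_m \<Gamma> \<alpha>) t = t}"

definition Phi_set :: "complex set \<Rightarrow> (complex \<Rightarrow> complex) \<Rightarrow> complex set" where
  "Phi_set \<Gamma> \<alpha> = closure {t \<in> \<Gamma>. (\<alpha> ^^ mult_m \<Gamma> \<alpha>) t \<noteq> t}"

definition Y_set :: "complex set \<Rightarrow> (complex \<Rightarrow> complex) \<Rightarrow> complex set" where
  "Y_set \<Gamma> \<alpha> = Lambda_set \<Gamma> \<alpha> \<inter> Phi_set \<Gamma> \<alpha>"

end

theory Submission
  imports Defs
begin

lemma key_interval:
  fixes \<gamma> :: "real \<Rightarrow> complex"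
  assumes Lc: "closed L" and Pc: "closed P" and GLP: "\<Gamma> - L \<subseteq> P"
    and I: "connected I" "I \<subseteq> {0..1}"
    and g: "continuous_on {0..1} \<gamma>" "\<gamma> ` {0..1} = \<Gamma>"
    and u: "u \<in> closure I" and v: "v \<in> I" "\<gamma> v \<notin> L"
    and avoid: "\<forall>t\<in>I. \<gamma> t \<notin> L \<inter> P"
    and xL: "\<gamma> u \<in> L"
  shows "\<exists>C\<in>components (\<Gamma> - L). \<gamma> u \<in> closure C - C"
proof -
  define S where "S = \<gamma> ` I"
  have conS: "connected S" unfolding S_def
    using I g(1) connected_continuous_image continuous_on_subset by blast
  have SG: "S \<subseteq> \<Gamma>" using I g S_def by auto
  have cl: "closedin (top_of_set S) (S \<inter> L)" using Lc closedin_closed_Int by blast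
  have eq: "S \<inter> L = S \<inter> (- P)"
    using SG GLP avoid S_def by auto
  have op: "openin (top_of_set S) (S \<inter> L)" unfolding eq
    using Pc openin_open_Int by blast
  have "S \<inter> L = {} \<or> S \<inter> L = S" using conS cl op connected_clopen by blast
  moreover have "\<gamma> v \<in> S" using v S_def by auto
  ultimately have SL: "S \<inter> L = {}" using v by blast
  define C where "C = connected_component_set (\<Gamma> - L) (\<gamma> v)"
  have Cc: "C \<in> components (\<Gamma> - L)" unfolding C_def
    by (rule componentsI) (use \<open>\<gamma> v \<in> S\<close> SG SL in auto)
  have SC: "S \<subseteq> C" unfolding C_def
    by (rule connected_component_maximal) (use \<open>\<gamma> v \<in> S\<close> SG SL conS in auto)
  have ci: "closure I \<subseteq> {0..1}" using I(2) closure_minimal by blast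
  have "\<gamma> ` closure I \<subseteq> closure S"
  proof (rule image_closure_subset)
    show "continuous_on (closure I) \<gamma>" using continuous_on_subset[OF g(1) ci] .
    show "\<gamma> ` I \<subseteq> closure S" using closure_subset S_def by blast
  qed simp
  then have "\<gamma> u \<in> closure C" using u SC closure_mono by blast
  moreover have "\<gamma> u \<notin> C" using xL connected_component_subset C_def by blast
  ultimately show ?thesis using Cc by blast
qed

lemma iter_cont:
  assumes "continuous_on G a" "a ` G \<subseteq> G"
  shows "continuous_on G (a ^^ n) \<and> (a ^^ n) ` G \<subseteq> G"
proof (induction n)
  case 0 then show ?case by (simp add: continuous_on_id)
next
  case (Suc n)
  have "continuous_on G (\<lambda>x. a ((a ^^ n) x))"
    using continuous_on_compose2[of G a G "a ^^ n"] Suc assms by blast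
  then show ?case using Suc assms by auto
qed

theorem proposition2p6:
  fixes \<Gamma> :: "complex set" and \<alpha> :: "complex \<Rightarrow> complex"
  assumes "smooth_jordan_curve \<Gamma>"
    and "\<exists>\<beta>. homeomorphism \<Gamma> \<Gamma> \<alpha> \<beta>"
    and "periodic_points \<Gamma> \<alpha> \<noteq> {}"
  shows "Y_set \<Gamma> \<alpha> - {x. x islimpt Y_set \<Gamma> \<alpha>}
           \<subseteq> \<Union>{closure C - C | C. C \<in> components (\<Gamma> - Lambda_set \<Gamma> \<alpha>)}"
proof
  fix x assume x: "x \<in> Y_set \<Gamma> \<alpha> - {x. x islimpt Y_set \<Gamma> \<alpha>}"
  obtain \<gamma> where sp: "simple_path \<gamma>" and pi: "path_image \<gamma> = \<Gamma>"
    using assms(1) unfolding smooth_jordan_curve_def by blast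
  have gc: "continuous_on {0..1} \<gamma>" using sp unfolding simple_path_def path_def by blast
  have gi: "\<gamma> ` {0..1} = \<Gamma>" using pi unfolding path_image_def by blast
  have lf: "loop_free \<gamma>" using sp unfolding simple_path_def by blast
  have Gcomp: "compact \<Gamma>" using gc gi compact_continuous_image by (metis compact_Icc)
  obtain \<beta> where h: "homeomorphism \<Gamma> \<Gamma> \<alpha> \<beta>" using assms(2) by blast
  have ac: "continuous_on \<Gamma> \<alpha>" "\<alpha> ` \<Gamma> \<subseteq> \<Gamma>" using h unfolding homeomorphism_def by auto
  define f where "f = \<alpha> ^^ mult_m \<Gamma> \<alpha>"
  have fc: "continuous_on \<Gamma> f" using iter_cont[OF ac] f_def by blast
  define L where "L = Lambda_set \<Gamma> \<alpha>"
  define P where "P = Phi_set \<Gamma> \<alpha>"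
  have Ldef: "L = {t \<in> \<Gamma>. (\<lambda>t. f t - t) t = 0}"
    unfolding L_def Lambda_set_def f_def by auto
  have Lc: "closed L" unfolding Ldef
    by (rule continuous_closed_preimage_constant)
       (use fc Gcomp compact_imp_closed in \<open>auto intro!: continuous_intros\<close>)
  have Peq: "P = closure (\<Gamma> - L)"
    unfolding P_def Phi_set_def L_def Lambda_set_def by (rule arg_cong[where f=closure]) auto
  have Pc: "closed P" using Peq by simp
  have GLP: "\<Gamma> - L \<subseteq> P" using Peq closure_subset by blast
  have Y: "Y_set \<Gamma> \<alpha> = L \<inter> P" unfolding Y_set_def L_def P_def by simp
  have xL: "x \<in> L" and xP: "x \<in> P" using x Y by auto
  from x have "\<not> x islimpt (L \<inter> P)" using Y by auto
  then obtain e where e: "e > 0" and eY: "\<forall>y\<in>L \<inter> P. y \<noteq> x \<longrightarrow> dist y x \<ge> e"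
    unfolding islimpt_approachable by (meson not_less)
  define A where "A = {s \<in> {0..1}. \<gamma> s \<notin> L}"
  have A01: "A \<subseteq> {0..1}" using A_def by auto
  have gA: "\<gamma> ` A = \<Gamma> - L" using gi A_def by auto
  have cA: "closure A \<subseteq> {0..1}" using A01 closure_minimal by blast
  have "bounded A" using bounded_subset[OF _ A01] by simp
  then have "compact (closure A)" by simp
  then have "compact (\<gamma> ` closure A)"
    using cA gc compact_continuous_image continuous_on_subset by blast
  then have "closure (\<gamma> ` A) \<subseteq> \<gamma> ` closure A"
    by (meson closure_minimal closure_subset compact_imp_closed image_mono)
  then obtain u where uA: "u \<in> closure A" and ux: "\<gamma> u = x" using xP Peq gA by auto
  have u01: "u \<in> {0..1}" using uA cA by blast
  obtain d where d: "d > 0" and dd: "\<forall>s\<in>{0..1}. dist s u < d \<longrightarrow> dist (\<gamma> s) (\<gamma> u) < e"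
    using gc u01 e unfolding continuous_on_iff by blast
  define \<delta> where "\<delta> = min d (1/2)"
  have "\<delta> > 0" using d \<delta>_def by simp
  then obtain v where vA: "v \<in> A" and vu: "dist v u < \<delta>"
    using uA closure_approachable by blast
  have v01: "v \<in> {0..1}" and vL: "\<gamma> v \<notin> L" using vA A_def by auto
  have "v \<noteq> u" using vL xL ux by auto
  have avoid: "\<gamma> t \<notin> L \<inter> P" if t01: "t \<in> {0..1}" and tu: "dist t u < \<delta>" and tne: "t \<noteq> u" for t
  proof
    assume tY: "\<gamma> t \<in> L \<inter> P"
    have "\<gamma> t \<noteq> \<gamma> u"
    proof
      assume "\<gamma> t = \<gamma> u"
      then have "t = u \<or> t = 0 \<and> u = 1 \<or> t = 1 \<and> u = 0"
        using lf t01 u01 unfolding loop_free_def by blast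
      then show False using tne tu \<delta>_def by (auto simp: dist_real_def)
    qed
    moreover have "dist (\<gamma> t) (\<gamma> u) < e" using dd t01 tu \<delta>_def by auto
    ultimately show False using eY tY ux by force
  qed
  have "\<exists>C\<in>components (\<Gamma> - L). x \<in> closure C - C"
  proof (cases "u < v")
    case True
    show ?thesis unfolding ux[symmetric]
    proof (rule key_interval[OF Lc Pc GLP _ _ gc gi, of "{u<..v}"])
      show "\<forall>t\<in>{u<..v}. \<gamma> t \<notin> L \<inter> P"
        using avoid u01 v01 vu True by (auto simp: dist_real_def)
    qed (use True u01 v01 vL xL ux in auto)
  next
    case False
    then have vu': "v < u" using \<open>v \<noteq> u\<close> by simp
    show ?thesis unfolding ux[symmetric]
    proof (rule key_interval[OF Lc Pc GLP _ _ gc gi, of "{v..<u}"])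
      show "\<forall>t\<in>{v..<u}. \<gamma> t \<notin> L \<inter> P"
        using avoid u01 v01 vu vu' by (auto simp: dist_real_def)
    qed (use vu' u01 v01 vL xL ux in auto)
  qed
  then show "x \<in> \<Union>{closure C - C | C. C \<in> components (\<Gamma> - Lambda_set \<Gamma> \<alpha>)}"
    unfolding L_def by blast
qed

end
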